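(* Let $n\in\{4,5\}$ and fix a triangulation $\tau$ of a convex $n$-gon by diagonals. Let $I$ be the set of marked points consisting of one point in each triangle and two points on each diagonal (none on the sides of the $n$-gon), and let $Q$ be the quiver on $I$ defined in the context (equivalently the skew-symmetric matrix $\varepsilon$). Then for $n=4$, $Q$ is mutation equivalent to a quiver whose underlying graph is the Dynkin diagram $D_4$, and for $n=5$, $Q$ is mutation equivalent to a quiver whose underlying graph is the Dynkin diagram $E_7$. Consequently, the cluster $\mathcal X$-space structures on the moduli spaces of configurations of $4$, resp. $5$, flags in $\mathbb{RP}^2$ given by these coordinates are of finite type $D_4$, resp. $E_7$.
   Context: Quiver on $I$: in each triangle of $\tau$ with vertices $u,v,w$ in counterclockwise order, let $c$ be its central marked point and, for a side $xy$ of the triangle that is a diagonal, let $p_{xy}$ be the marked point on it nearer to $x$. Draw the arrows $c\to p_{uv}$ and $p_{vu}\to c$ for each of the three sides $(u,v),(v,w),(w,u)$ traversed counterclockwise, and at each vertex $v$ with preceding vertex $u$ and following vertex $w$ draw the arrow $p_{vw}\to p_{vu}$; arrows involving a point on a side of the $n$-gon (not a marked point) are omitted. Set $\varepsilon_{ij}$ = (number of arrows $i\to j$) $-$ (number of arrows $j\to i$), summed over all triangles. Mutation at $k$ replaces $\varepsilon$ by $\varepsilon'_{ij}=-\varepsilon_{ij}$ if $k\in\{i,j\}$ and $\varepsilon'_{ij}=\varepsilon_{ij}+\varepsilon_{ik}\max\{0,\operatorname{sgn}(\varepsilon_{ik})\varepsilon_{kj}\}$ otherwise; two quivers are mutation equivalent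 if related by a sequence of mutations and relabelings. The coordinates on configurations of $n$ flags (modulo $PGL_3$) are the triple ratios of the flags at the vertices of the triangles and the cross-ratios at the diagonals, as in the parametrization of $\mathcal P_3^n$. *)

theory Defs
  imports Main
begin

text \<open>Vertices of the convex n-gon are 0,...,n-1 in counterclockwise order.
  A diagonal is an ordered pair (i,j) with i < j that is not a side.\<close>

definition is_side :: "nat \<Rightarrow> nat \<times> nat \<Rightarrow> bool" where
  "is_side n e = (case e of (i,j) \<Rightarrow> i < j \<and> j < n \<and> (j = i + 1 \<or> (i = 0 \<and> j = n - 1)))"

definition is_diagonal :: "nat \<Rightarrow> nat \<times> nat \<Rightarrow> bool" where
  "is_diagonal n e = (case e of (i,j) \<Rightarrow> i < j \<and> j < n \<and> i + 2 \<le> j \<and> \<not> (i = 0 \<and> j = n - 1))"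

definition crosses :: "nat \<times> nat \<Rightarrow> nat \<times> nat \<Rightarrow> bool" where
  "crosses e f = (case e of (a,b) \<Rightarrow> case f of (c,d) \<Rightarrow>
      (a < c \<and> c < b \<and> b < d) \<or> (c < a \<and> a < d \<and> d < b))"

definition is_triangulation :: "nat \<Rightarrow> (nat \<times> nat) set \<Rightarrow> bool" where
  "is_triangulation n T =
     ((\<forall>e\<in>T. is_diagonal n e) \<and>
      (\<forall>e\<in>T. \<forall>f\<in>T. \<not> crosses e f) \<and>
      (\<forall>e. is_diagonal n e \<and> e \<notin> T \<longrightarrow> (\<exists>f\<in>T. crosses e f)))"

definition is_edge :: "nat \<Rightarrow> (nat \<times> nat) set \<Rightarrow> nat \<times> nat \<Rightarrow> bool" where
  "is_edge n T e = (is_side n e \<or> e \<in> T)"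

definition triangles :: "nat \<Rightarrow> (nat \<times> nat) set \<Rightarrow> (nat \<times> nat \<times> nat) set" where
  "triangles n T = {(u,v,w). u < v \<and> v < w \<and> w < n \<and>
      is_edge n T (u,v) \<and> is_edge n T (v,w) \<and> is_edge n T (u,w)}"

text \<open>Cen t: the central point of triangle t; Pt x y: the point on the segment xy nearer to x.\<close>
datatype mpoint = Cen "nat \<times> nat \<times> nat" | Pt nat nat

definition marked_points :: "nat \<Rightarrow> (nat \<times> nat) set \<Rightarrow> mpoint set" where
  "marked_points n T = Cen ` triangles n T \<union> {Pt x y | x y. (min x y, max x y) \<in> T}"

text \<open>Arrows drawn in a triangle (u,v,w) (counterclockwise), before omitting those
  involving points on sides of the n-gon.\<close>
definition tri_arrows_raw :: "nat \<times> nat \<times> nat \<Rightarrow> (mpoint \<times> mpoint) list" where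
  "tri_arrows_raw t = (case t of (u,v,w) \<Rightarrow>
     concat (map (\<lambda>(x,y). [(Cen t, Pt x y), (Pt y x, Cen t)]) [(u,v),(v,w),(w,u)])
     @ map (\<lambda>(a,b,c). (Pt b c, Pt b a)) [(u,v,w),(v,w,u),(w,u,v)])"

definition tri_arrows :: "nat \<Rightarrow> (nat \<times> nat) set \<Rightarrow> nat \<times> nat \<times> nat \<Rightarrow> (mpoint \<times> mpoint) list" where
  "tri_arrows n T t = filter (\<lambda>(p,q). p \<in> marked_points n T \<and> q \<in> marked_points n T) (tri_arrows_raw t)"

definition eps :: "nat \<Rightarrow> (nat \<times> nat) set \<Rightarrow> mpoint \<Rightarrow> mpoint \<Rightarrow> int" where
  "eps n T i j = (\<Sum>t\<in>triangles n T.
      int (count_list (tri_arrows n T t) (i,j)) - int (count_list (tri_arrows n T t) (j,i)))"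

definition mutate :: "'a \<Rightarrow> ('a \<Rightarrow> 'a \<Rightarrow> int) \<Rightarrow> ('a \<Rightarrow> 'a \<Rightarrow> int)" where
  "mutate k e = (\<lambda>i j. if i = k \<or> j = k then - e i j
                       else e i j + e i k * max 0 (sgn (e i k) * e k j))"

definition mutate_seq :: "'a list \<Rightarrow> ('a \<Rightarrow> 'a \<Rightarrow> int) \<Rightarrow> ('a \<Rightarrow> 'a \<Rightarrow> int)" where
  "mutate_seq ks e = fold mutate ks e"

text \<open>Two quivers are
  mutation equivalent iff one is obtained from the other by a sequence of mutations
  followed by a relabeling (relabelings commute with mutations, so this equals the
  equivalence generated by mutations and relabelings).\<close>
definition mutation_equivalent ::
  "'a set \<Rightarrow> ('a \<Rightarrow> 'a \<Rightarrow> int) \<Rightarrow> 'b set \<Rightarrow> ('b \<Rightarrow> 'b \<Rightarrow> int) \<Rightarrow> bool" where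
  "mutation_equivalent V e W d =
     (\<exists>ks f. set ks \<subseteq> V \<and> bij_betw f V W \<and>
        (\<forall>i\<in>V. \<forall>j\<in>V. d (f i) (f j) = mutate_seq ks e i j))"

definition underlying_graph_is ::
  "'b set \<Rightarrow> ('b \<Rightarrow> 'b \<Rightarrow> int) \<Rightarrow> ('b \<Rightarrow> 'b \<Rightarrow> bool) \<Rightarrow> bool" where
  "underlying_graph_is W d G = (\<forall>i\<in>W. \<forall>j\<in>W. \<bar>d i j\<bar> = (if G i j then 1 else 0))"

definition D4_vertices :: "nat set" where "D4_vertices = {0..<4}"
definition D4_edge :: "nat \<Rightarrow> nat \<Rightarrow> bool" where
  "D4_edge i j = ({i,j} \<in> {{0,1},{0,2},{0,3}})"

definition E7_vertices :: "nat set" where "E7_vertices = {0..<7}"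
definition E7_edge :: "nat \<Rightarrow> nat \<Rightarrow> bool" where
  "E7_edge i j = ({i,j} \<in> {{0,1},{1,2},{2,3},{3,4},{4,5},{2,6}})"

definition mutation_equivalent_to_Dynkin ::
  "'a set \<Rightarrow> ('a \<Rightarrow> 'a \<Rightarrow> int) \<Rightarrow> nat set \<Rightarrow> (nat \<Rightarrow> nat \<Rightarrow> bool) \<Rightarrow> bool" where
  "mutation_equivalent_to_Dynkin V e W G =
     (\<exists>d. mutation_equivalent V e W d \<and> underlying_graph_is W d G)"

end

theory Submission
  imports Defs
begin

definition trisL :: "nat \<Rightarrow> (nat \<times> nat) list \<Rightarrow> (nat \<times> nat \<times> nat) list" where
  "trisL n TL = filter (\<lambda>(u,v,w). u < v \<and> v < w \<and> is_edge n (set TL) (u,v) \<and> is_edge n (set TL) (v,w) \<and> is_edge n (set TL) (u,w))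
     (concat (map (\<lambda>u. concat (map (\<lambda>v. map (\<lambda>w. (u,v,w)) [0..<n]) [0..<n])) [0..<n]))"

lemma triangles_L: "triangles n (set TL) = set (trisL n TL)"
  unfolding triangles_def trisL_def
  apply (rule set_eqI)
  apply (clarsimp simp: image_iff)
  apply (rule iffI)
   apply (elim conjE, intro conjI; assumption?; linarith)
  apply (elim conjE, intro conjI; assumption)
  done

definition mpL :: "nat \<Rightarrow> (nat \<times> nat) list \<Rightarrow> mpoint list" where
  "mpL n TL = map Cen (trisL n TL) @ map (\<lambda>(a,b). Pt a b) TL @ map (\<lambda>(a,b). Pt b a) TL"

lemma marked_L:
  assumes "\<forall>(a,b)\<in>set TL. a < b"
  shows "marked_points n (set TL) = set (mpL n TL)"
proof -
  have "{Pt x y | x y. (min x y, max x y) \<in> set TL} = (\<lambda>(a,b). Pt a b) ` set TL \<union> (\<lambda>(a,b). Pt b a) ` set TL"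
  proof (intro equalityI subsetI)
    fix z assume "z \<in> {Pt x y | x y. (min x y, max x y) \<in> set TL}"
    then obtain x y where z: "z = Pt x y" and m: "(min x y, max x y) \<in> set TL" by blast
    show "z \<in> (\<lambda>(a,b). Pt a b) ` set TL \<union> (\<lambda>(a,b). Pt b a) ` set TL"
    proof (cases "x \<le> y")
      case True
      then have "(x,y) \<in> set TL" using m by (simp add: min_def max_def)
      then have "z \<in> (\<lambda>(a,b). Pt a b) ` set TL" unfolding z by (rule rev_image_eqI) simp
      then show ?thesis by (rule UnI1)
    next
      case False
      then have "(y,x) \<in> set TL" using m by (simp add: min_def max_def)
      then have "z \<in> (\<lambda>(a,b). Pt b a) ` set TL" unfolding z by (rule rev_image_eqI) simp
      then show ?thesis by (rule UnI2)
    qed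
  next
    fix z assume "z \<in> (\<lambda>(a,b). Pt a b) ` set TL \<union> (\<lambda>(a,b). Pt b a) ` set TL"
    then obtain a b where ab: "(a,b) \<in> set TL" and z: "z = Pt a b \<or> z = Pt b a" by auto
    have "a < b" using assms ab by blast
    then have m1: "(min a b, max a b) \<in> set TL" and m2: "(min b a, max b a) \<in> set TL"
      using ab by (simp_all add: min_def max_def)
    from z show "z \<in> {Pt x y | x y. (min x y, max x y) \<in> set TL}"
      using m1 m2 by blast
  qed
  then show ?thesis unfolding marked_points_def mpL_def triangles_L by simp
qed

definition epsL :: "nat \<Rightarrow> (nat \<times> nat) list \<Rightarrow> mpoint \<Rightarrow> mpoint \<Rightarrow> int" where
  "epsL n TL i j = sum_list (map (\<lambda>t.
      int (count_list (filter (\<lambda>(p,q). p \<in> set (mpL n TL) \<and> q \<in> set (mpL n TL)) (tri_arrows_raw t)) (i,j))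
    - int (count_list (filter (\<lambda>(p,q). p \<in> set (mpL n TL) \<and> q \<in> set (mpL n TL)) (tri_arrows_raw t)) (j,i))) (trisL n TL))"

lemma eps_L:
  assumes "\<forall>(a,b)\<in>set TL. a < b" "distinct (trisL n TL)"
  shows "eps n (set TL) i j = epsL n TL i j"
  unfolding eps_def epsL_def tri_arrows_def triangles_L marked_L[OF assms(1)]
  using assms(2) by (simp add: sum_list_distinct_conv_sum_set)

definition mutM :: "nat \<Rightarrow> int list list \<Rightarrow> int list list" where
  "mutM k A = map (\<lambda>i. map (\<lambda>j. if i = k \<or> j = k then - (A!i!j)
        else A!i!j + A!i!k * max 0 (sgn (A!i!k) * A!k!j)) [0..<length A]) [0..<length A]"

lemma mutM_length[simp]: "length (mutM k A) = length A"
  by (simp add: mutM_def)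

lemma mutM_nth: "i < length A \<Longrightarrow> j < length A \<Longrightarrow> mutM k A ! i ! j = mutate k (\<lambda>i j. A!i!j) i j"
  by (simp add: mutM_def mutate_def)

lemma mutate_agree:
  assumes "\<forall>i\<in>S. \<forall>j\<in>S. e i j = e' i j" "k \<in> S"
  shows "\<forall>i\<in>S. \<forall>j\<in>S. mutate k e i j = mutate k e' i j"
  using assms by (simp add: mutate_def)

lemma mutate_seq_agree:
  assumes "\<forall>i\<in>S. \<forall>j\<in>S. e i j = e' i j" "set ks \<subseteq> S"
  shows "\<forall>i\<in>S. \<forall>j\<in>S. mutate_seq ks e i j = mutate_seq ks e' i j"
  using assms
proof (induction ks arbitrary: e e')
  case Nil then show ?case by (simp add: mutate_seq_def)
next
  case (Cons k ks)
  have kS: "k \<in> S" using Cons.prems by simp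
  have "\<forall>i\<in>S. \<forall>j\<in>S. mutate k e i j = mutate k e' i j"
    using mutate_agree[OF Cons.prems(1) kS] .
  then show ?case using Cons.IH[of "mutate k e" "mutate k e'"] Cons.prems by (simp add: mutate_seq_def)
qed

lemma fold_mutM:
  assumes "\<forall>k\<in>set ks. k < length A"
  shows "\<forall>i<length A. \<forall>j<length A. fold mutM ks A ! i ! j = mutate_seq ks (\<lambda>i j. A!i!j) i j"
  using assms
proof (induction ks arbitrary: A)
  case Nil then show ?case by (simp add: mutate_seq_def)
next
  case (Cons k ks)
  have IH: "\<forall>i<length A. \<forall>j<length A. fold mutM ks (mutM k A) ! i ! j = mutate_seq ks (\<lambda>i j. mutM k A!i!j) i j"
    using Cons.IH[of "mutM k A"] Cons.prems by simp
  have ag: "\<forall>i\<in>{..<length A}. \<forall>j\<in>{..<length A}. (\<lambda>i j. mutM k A!i!j) i j = mutate k (\<lambda>i j. A!i!j) i j"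
    by (simp add: mutM_nth)
  have "\<forall>i\<in>{..<length A}. \<forall>j\<in>{..<length A}. mutate_seq ks (\<lambda>i j. mutM k A!i!j) i j = mutate_seq ks (mutate k (\<lambda>i j. A!i!j)) i j"
    by (rule mutate_seq_agree[OF ag]) (use Cons.prems in auto)
  then show ?case using IH by (simp add: mutate_seq_def)
qed

lemma mutate_seq_reindex:
  assumes "distinct q" "\<forall>k\<in>set ks. k < length q"
  shows "\<forall>a<length q. \<forall>b<length q. mutate_seq (map (nth q) ks) e (q!a) (q!b) = mutate_seq ks (\<lambda>a b. e (q!a) (q!b)) a b"
  using assms(2)
proof (induction ks arbitrary: e)
  case Nil then show ?case by (simp add: mutate_seq_def)
next
  case (Cons k ks)
  have IH: "\<forall>a<length q. \<forall>b<length q. mutate_seq (map (nth q) ks) (mutate (q!k) e) (q!a) (q!b)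
     = mutate_seq ks (\<lambda>a b. mutate (q!k) e (q!a) (q!b)) a b"
    using Cons by simp
  have kq: "k < length q" using Cons.prems by simp
  have ag: "\<forall>a\<in>{..<length q}. \<forall>b\<in>{..<length q}. (\<lambda>a b. mutate (q!k) e (q!a) (q!b)) a b = mutate k (\<lambda>a b. e (q!a) (q!b)) a b"
    using assms(1) kq by (simp add: mutate_def nth_eq_iff_index_eq)
  have "\<forall>a\<in>{..<length q}. \<forall>b\<in>{..<length q}. mutate_seq ks (\<lambda>a b. mutate (q!k) e (q!a) (q!b)) a b = mutate_seq ks (mutate k (\<lambda>a b. e (q!a) (q!b))) a b"
    by (rule mutate_seq_agree[OF ag]) (use Cons.prems in auto)
  then show ?case using IH by (simp add: mutate_seq_def)
qed

definition A0 :: "nat \<Rightarrow> (nat \<times> nat) list \<Rightarrow> mpoint list \<Rightarrow> int list list" where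
  "A0 n TL q = map (\<lambda>a. map (\<lambda>b. epsL n TL (q!a) (q!b)) [0..<length q]) [0..<length q]"

lemma generic:
  assumes TL: "\<forall>(a,b)\<in>set TL. a < b" "distinct (trisL n TL)"
    and q: "distinct q" "set q = set (mpL n TL)"
    and W: "W = {0..<length q}"
    and ks: "\<forall>k\<in>set ks. k < length q"
    and chk0: "list_all (\<lambda>a. list_all (\<lambda>b. \<bar>fold mutM ks (A0 n TL q) ! a ! b\<bar> = (if G a b then 1 else 0)) [0..<length q]) [0..<length q]"
  shows "mutation_equivalent_to_Dynkin (marked_points n (set TL)) (eps n (set TL)) W G"
proof -
  define m where "m = length q"
  define A where "A = A0 n TL q"
  define e where "e = eps n (set TL)"
  define d where "d = (\<lambda>a b. fold mutM ks A ! a ! b)"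
  have chk: "\<forall>a<m. \<forall>b<m. \<bar>d a b\<bar> = (if G a b then 1 else 0)"
    using chk0 unfolding d_def A_def m_def by (simp add: list_all_iff)
  have W': "W = {..<m}" using W unfolding m_def by (simp add: atLeast0LessThan)
  have V: "marked_points n (set TL) = set q" using marked_L[OF TL(1)] q(2) by simp
  have lenA: "length A = m" by (simp add: A0_def A_def m_def)
  have bq: "bij_betw (nth q) {..<m} (set q)"
    using q(1) unfolding m_def by (rule bij_betw_nth) auto
  define f where "f = inv_into {..<m} (nth q)"
  have bf: "bij_betw f (set q) W" unfolding f_def W' by (rule bij_betw_inv_into[OF bq])
  have key: "d a b = mutate_seq (map (nth q) ks) e (q!a) (q!b)" if a: "a < m" and b: "b < m" for a b
  proof -
    have "d a b = mutate_seq ks (\<lambda>i j. A!i!j) a b"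
      using fold_mutM[of ks A] ks a b lenA unfolding d_def m_def by simp
    also have "\<dots> = mutate_seq ks (\<lambda>a b. e (q!a) (q!b)) a b"
    proof -
      have ag: "\<forall>i\<in>{..<m}. \<forall>j\<in>{..<m}. (\<lambda>i j. A!i!j) i j = (\<lambda>a b. e (q!a) (q!b)) i j"
        unfolding A_def e_def m_def by (simp add: A0_def eps_L[OF TL])
      have "set ks \<subseteq> {..<m}" using ks unfolding m_def by auto
      from mutate_seq_agree[OF ag this] a b show ?thesis by simp
    qed
    also have "\<dots> = mutate_seq (map (nth q) ks) e (q!a) (q!b)"
      using mutate_seq_reindex[OF q(1) ks, of e] a b unfolding m_def by simp
    finally show ?thesis .
  qed
  have me: "mutation_equivalent (set q) e W d"
    unfolding mutation_equivalent_def
  proof (intro exI conjI ballI)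
    show "set (map (nth q) ks) \<subseteq> set q" using ks by auto
    show "bij_betw f (set q) W" by (rule bf)
  next
    fix i j assume i: "i \<in> set q" and j: "j \<in> set q"
    have iq: "i \<in> (nth q) ` {..<m}" using bq i by (simp add: bij_betw_def)
    have jq: "j \<in> (nth q) ` {..<m}" using bq j by (simp add: bij_betw_def)
    have fi: "f i < m" "q ! (f i) = i" unfolding f_def
      using inv_into_into[OF iq] f_inv_into_f[OF iq] by auto
    have fj: "f j < m" "q ! (f j) = j" unfolding f_def
      using inv_into_into[OF jq] f_inv_into_f[OF jq] by auto
    have "d (f i) (f j) = mutate_seq (map (nth q) ks) e (q ! f i) (q ! f j)"
      by (rule key[OF fi(1) fj(1)])
    then show "d (f i) (f j) = mutate_seq (map (nth q) ks) e i j"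
      by (simp only: fi(2) fj(2))
  qed
  have ug: "underlying_graph_is W d G"
    unfolding underlying_graph_is_def W' using chk by auto
  show ?thesis unfolding mutation_equivalent_to_Dynkin_def V e_def[symmetric]
    by (rule exI[of _ d], rule conjI[OF me ug])
qed

lemma inst0: "mutation_equivalent_to_Dynkin (marked_points 4 (set [(0,2)])) (eps 4 (set [(0,2)])) D4_vertices D4_edge"
  apply (rule generic[where q="[Pt 0 2, Cen (0,1,2), Cen (0,2,3), Pt 2 0]" and ks="[1, 0]"])
  subgoal by simp
  subgoal by code_simp
  subgoal by simp
  subgoal by code_simp
  subgoal by (simp add: D4_vertices_def eval_nat_numeral)
  subgoal by simp
  subgoal by code_simp
  done

lemma inst1: "mutation_equivalent_to_Dynkin (marked_points 4 (set [(1,3)])) (eps 4 (set [(1,3)])) D4_vertices D4_edge"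
  apply (rule generic[where q="[Pt 1 3, Cen (0,1,3), Cen (1,2,3), Pt 3 1]" and ks="[1, 0]"])
  subgoal by simp
  subgoal by code_simp
  subgoal by simp
  subgoal by code_simp
  subgoal by (simp add: D4_vertices_def eval_nat_numeral)
  subgoal by simp
  subgoal by code_simp
  done

lemma inst2: "mutation_equivalent_to_Dynkin (marked_points 5 (set [(0,2),(0,3)])) (eps 5 (set [(0,2),(0,3)])) E7_vertices E7_edge"
  apply (rule generic[where q="[Pt 2 0, Pt 0 2, Pt 3 0, Cen (0,3,4), Pt 0 3, Cen (0,1,2), Cen (0,2,3)]" and ks="[5, 1, 4, 3, 2]"])
  subgoal by simp
  subgoal by code_simp
  subgoal by simp
  subgoal by code_simp
  subgoal by (simp add: E7_vertices_def eval_nat_numeral)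
  subgoal by simp
  subgoal by code_simp
  done

lemma inst3: "mutation_equivalent_to_Dynkin (marked_points 5 (set [(0,2),(2,4)])) (eps 5 (set [(0,2),(2,4)])) E7_vertices E7_edge"
  apply (rule generic[where q="[Pt 0 2, Pt 2 0, Pt 4 2, Cen (2,3,4), Pt 2 4, Cen (0,1,2), Cen (0,2,4)]" and ks="[5, 1, 4, 3, 2]"])
  subgoal by simp
  subgoal by code_simp
  subgoal by simp
  subgoal by code_simp
  subgoal by (simp add: E7_vertices_def eval_nat_numeral)
  subgoal by simp
  subgoal by code_simp
  done

lemma inst4: "mutation_equivalent_to_Dynkin (marked_points 5 (set [(0,3),(1,3)])) (eps 5 (set [(0,3),(1,3)])) E7_vertices E7_edge"
  apply (rule generic[where q="[Pt 3 0, Pt 0 3, Pt 3 1, Pt 1 3, Cen (0,3,4), Cen (1,2,3), Cen (0,1,3)]" and ks="[6, 1, 3, 4, 2]"])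
  subgoal by simp
  subgoal by code_simp
  subgoal by simp
  subgoal by code_simp
  subgoal by (simp add: E7_vertices_def eval_nat_numeral)
  subgoal by simp
  subgoal by code_simp
  done

lemma inst5: "mutation_equivalent_to_Dynkin (marked_points 5 (set [(1,3),(1,4)])) (eps 5 (set [(1,3),(1,4)])) E7_vertices E7_edge"
  apply (rule generic[where q="[Pt 4 1, Pt 1 4, Pt 3 1, Cen (1,2,3), Pt 1 3, Cen (0,1,4), Cen (1,3,4)]" and ks="[5, 1, 4, 3, 2]"])
  subgoal by simp
  subgoal by code_simp
  subgoal by simp
  subgoal by code_simp
  subgoal by (simp add: E7_vertices_def eval_nat_numeral)
  subgoal by simp
  subgoal by code_simp
  done

lemma inst6: "mutation_equivalent_to_Dynkin (marked_points 5 (set [(1,4),(2,4)])) (eps 5 (set [(1,4),(2,4)])) E7_vertices E7_edge"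
  apply (rule generic[where q="[Pt 1 4, Pt 4 1, Pt 2 4, Cen (2,3,4), Pt 4 2, Cen (0,1,4), Cen (1,2,4)]" and ks="[5, 1, 4, 3, 2]"])
  subgoal by simp
  subgoal by code_simp
  subgoal by simp
  subgoal by code_simp
  subgoal by (simp add: E7_vertices_def eval_nat_numeral)
  subgoal by simp
  subgoal by code_simp
  done

lemma pick2: "T \<subseteq> A \<Longrightarrow> A \<subseteq> {a,b} \<union> N \<Longrightarrow> N \<inter> T = {} \<Longrightarrow> a \<in> T \<Longrightarrow> b \<in> T \<Longrightarrow> T = set [a,b]"
  by auto

lemma class4:
  assumes "is_triangulation 4 T"
  shows "T = set [(0,2)] \<or> T = set [(1,3)]"
proof -
  let ?D = "{(0,2),(1,3)} :: (nat \<times> nat) set"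
  have diag: "is_diagonal 4 e \<longleftrightarrow> e \<in> ?D" for e
    by (cases e) (auto simp: is_diagonal_def less_Suc_eq numeral_eq_Suc)
  have sub: "T \<subseteq> ?D" using assms diag unfolding is_triangulation_def by blast
  have nc: "\<And>e f. e \<in> T \<Longrightarrow> f \<in> T \<Longrightarrow> \<not> crosses e f" using assms unfolding is_triangulation_def by blast
  have mx: "\<And>e. e \<in> ?D \<Longrightarrow> e \<notin> T \<Longrightarrow> \<exists>f\<in>?D. f \<in> T \<and> crosses e f"
    using assms sub diag unfolding is_triangulation_def by blast
  have T_eq: "T = {x. (x = (0,2) \<and> (0,2) \<in> T) \<or> (x = (1,3) \<and> (1,3) \<in> T)}" using sub by auto
  show ?thesis
    apply (cases "(0,2) \<in> T"; cases "(1,3) \<in> T")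
    using nc[of "(0,2)" "(1,3)"] mx[of "(0,2)"] mx[of "(1,3)"]
    by (subst T_eq; auto simp: crosses_def)+
qed

lemma class5:
  assumes "is_triangulation 5 T"
  shows "T = set [(0,2),(0,3)] \<or> T = set [(0,2),(2,4)] \<or> T = set [(0,3),(1,3)] \<or> T = set [(1,3),(1,4)] \<or> T = set [(1,4),(2,4)]"
proof -
  let ?D = "{(0,2),(0,3),(1,3),(1,4),(2,4)} :: (nat \<times> nat) set"
  have diag: "is_diagonal 5 e \<longleftrightarrow> e \<in> ?D" for e
    by (cases e) (auto simp: is_diagonal_def less_Suc_eq numeral_eq_Suc)
  have sub: "T \<subseteq> ?D" using assms diag unfolding is_triangulation_def by blast
  have nc: "\<And>e f. e \<in> T \<Longrightarrow> f \<in> T \<Longrightarrow> \<not> crosses e f" using assms unfolding is_triangulation_def by blast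
  have mx: "\<And>e. e \<in> ?D \<Longrightarrow> e \<notin> T \<Longrightarrow> \<exists>f\<in>?D. f \<in> T \<and> crosses e f"
    using assms sub diag unfolding is_triangulation_def by blast
  have T_eq: "T = {x. (x = (0,2) \<and> (0,2) \<in> T) \<or> (x = (0,3) \<and> (0,3) \<in> T) \<or> (x = (1,3) \<and> (1,3) \<in> T)
      \<or> (x = (1,4) \<and> (1,4) \<in> T) \<or> (x = (2,4) \<and> (2,4) \<in> T)}" using sub by auto
  have c: "\<not> ((0,2) \<in> T \<and> (1,3) \<in> T)" "\<not> ((0,2) \<in> T \<and> (1,4) \<in> T)" "\<not> ((0,3) \<in> T \<and> (1,4) \<in> T)"
     "\<not> ((0,3) \<in> T \<and> (2,4) \<in> T)" "\<not> ((1,3) \<in> T \<and> (2,4) \<in> T)"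
    using nc[of "(0,2)" "(1,3)"] nc[of "(0,2)" "(1,4)"] nc[of "(0,3)" "(1,4)"] nc[of "(0,3)" "(2,4)"] nc[of "(1,3)" "(2,4)"]
    by (auto simp: crosses_def)
  have m: "(0,2) \<notin> T \<Longrightarrow> (1,3) \<in> T \<or> (1,4) \<in> T"
     "(0,3) \<notin> T \<Longrightarrow> (1,4) \<in> T \<or> (2,4) \<in> T"
     "(1,3) \<notin> T \<Longrightarrow> (0,2) \<in> T \<or> (2,4) \<in> T"
     "(1,4) \<notin> T \<Longrightarrow> (0,2) \<in> T \<or> (0,3) \<in> T"
     "(2,4) \<notin> T \<Longrightarrow> (0,3) \<in> T \<or> (1,3) \<in> T"
    using mx[of "(0,2)"] mx[of "(0,3)"] mx[of "(1,3)"] mx[of "(1,4)"] mx[of "(2,4)"]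
    by (auto simp: crosses_def)
  have p0: "T = set [(0,2),(0,3)]" if "(0,2) \<in> T" "(0,3) \<in> T" "(1,3) \<notin> T" "(1,4) \<notin> T" "(2,4) \<notin> T"
    using pick2[OF sub, of "(0,2)" "(0,3)" "{(1,3),(1,4),(2,4)}"] that by simp
  have p1: "T = set [(0,2),(2,4)]" if "(0,2) \<in> T" "(0,3) \<notin> T" "(1,3) \<notin> T" "(1,4) \<notin> T" "(2,4) \<in> T"
    using pick2[OF sub, of "(0,2)" "(2,4)" "{(0,3),(1,3),(1,4)}"] that by simp
  have p2: "T = set [(0,3),(1,3)]" if "(0,2) \<notin> T" "(0,3) \<in> T" "(1,3) \<in> T" "(1,4) \<notin> T" "(2,4) \<notin> T"
    using pick2[OF sub, of "(0,3)" "(1,3)" "{(0,2),(1,4),(2,4)}"] that by simp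
  have p3: "T = set [(1,3),(1,4)]" if "(0,2) \<notin> T" "(0,3) \<notin> T" "(1,3) \<in> T" "(1,4) \<in> T" "(2,4) \<notin> T"
    using pick2[OF sub, of "(1,3)" "(1,4)" "{(0,2),(0,3),(2,4)}"] that by simp
  have p4: "T = set [(1,4),(2,4)]" if "(0,2) \<notin> T" "(0,3) \<notin> T" "(1,3) \<notin> T" "(1,4) \<in> T" "(2,4) \<in> T"
    using pick2[OF sub, of "(1,4)" "(2,4)" "{(0,2),(0,3),(1,3)}"] that by simp
  have "((0,2) \<in> T \<and> (0,3) \<in> T \<and> (1,3) \<notin> T \<and> (1,4) \<notin> T \<and> (2,4) \<notin> T) \<or> ((0,2) \<in> T \<and> (0,3) \<notin> T \<and> (1,3) \<notin> T \<and> (1,4) \<notin> T \<and> (2,4) \<in> T) \<or> ((0,2) \<notin> T \<and> (0,3) \<in> T \<and> (1,3) \<in> T \<and> (1,4) \<notin> T \<and> (2,4) \<notin> T) \<or> ((0,2) \<notin> T \<and> (0,3) \<notin> T \<and> (1,3) \<in> T \<and> (1,4) \<in> T \<and> (2,4) \<notin> T) \<or> ((0,2) \<notin> T \<and> (0,3) \<notin> T \<and> (1,3) \<notin> T \<and> (1,4) \<in> T \<and> (2,4) \<in> T)" using c m by argo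
  then show ?thesis using p0 p1 p2 p3 p4 by argo
qed
theorem mainTheorem12:
  fixes n :: nat and T :: "(nat \<times> nat) set"
  assumes "n \<in> {4, 5}"
    and "is_triangulation n T"
  shows "(n = 4 \<longrightarrow> mutation_equivalent_to_Dynkin (marked_points n T) (eps n T) D4_vertices D4_edge)
       \<and> (n = 5 \<longrightarrow> mutation_equivalent_to_Dynkin (marked_points n T) (eps n T) E7_vertices E7_edge)"
proof -
  from assms(1) have "n = 4 \<or> n = 5" by simp
  then show ?thesis
  proof
    assume n4: "n = 4"
    have "T = set [(0,2)] \<or> T = set [(1,3)]" using class4 assms(2) n4 by simp
    then have "mutation_equivalent_to_Dynkin (marked_points 4 T) (eps 4 T) D4_vertices D4_edge"
      by (elim disjE) (simp_all only: inst0 inst1)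
    then show ?thesis using n4 by simp
  next
    assume n5: "n = 5"
    have "T = set [(0,2),(0,3)] \<or> T = set [(0,2),(2,4)] \<or> T = set [(0,3),(1,3)] \<or> T = set [(1,3),(1,4)] \<or> T = set [(1,4),(2,4)]"
      using class5 assms(2) n5 by simp
    then have "mutation_equivalent_to_Dynkin (marked_points 5 T) (eps 5 T) E7_vertices E7_edge"
      by (elim disjE) (simp_all only: inst2 inst3 inst4 inst5 inst6)
    then show ?thesis using n5 by simp
  qed
qed

end
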